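(* Every effective Bonnet Myers sharp graph is reflective. That is: if $G=(V,E)$ is a finite, simple, connected graph with $K:=\min_{x\sim y}\kappa(x,y)>0$ and $\operatorname{diam}_{\operatorname{eff}}(G)=\frac{\max_v\operatorname{Deg}(v)}{K}$, then $G$ is reflective.
   Context: $d$ is the combinatorial distance, $\operatorname{Deg}$ the degree, $\operatorname{diam}_{\operatorname{eff}}(G)=\frac{1}{|V|^2}\sum_{x,y}d(x,y)$. Laplacian $\Delta f(x)=\sum_{y\sim x}(f(y)-f(x))$. Ollivier curvature: $\kappa(x,y)=\inf\{\Delta f(x)-\Delta f(y): f(y)-f(x)=1,\ \max_{u\sim v}|f(u)-f(v)|=1\}$. For adjacent $x\sim y$ let $V_x^y=\{v: d(v,x)<d(v,y)\}$, $V^{xy}=\{v:d(v,x)=d(v,y)\}$. A reflection from $x$ to $y$ is a graph automorphism $\phi$ with $\phi\circ\phi=\mathrm{id}$, $\phi(x)=y$, such that the edges between $V_x^y$ and $V_y^x$ are exactly $\{\{x',\phi(x')\}:x'\in V_x^y\}$ and $\phi$ fixes $V^{xy}$ pointwise. $G$ is reflective if every edge admits a reflection. *)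

theory Defs
  imports Complex_Main
begin

definition finite_simple_graph :: "'a set \<Rightarrow> ('a \<Rightarrow> 'a \<Rightarrow> bool) \<Rightarrow> bool" where
  "finite_simple_graph V E \<longleftrightarrow> finite V \<and>
     (\<forall>u v. E u v \<longrightarrow> u \<in> V \<and> v \<in> V) \<and>
     (\<forall>u v. E u v \<longrightarrow> E v u) \<and> (\<forall>u. \<not> E u u)"

inductive walk :: "('a \<Rightarrow> 'a \<Rightarrow> bool) \<Rightarrow> nat \<Rightarrow> 'a \<Rightarrow> 'a \<Rightarrow> bool" for E where
  walk0: "walk E 0 x x"
| walkS: "E x z \<Longrightarrow> walk E n z y \<Longrightarrow> walk E (Suc n) x y"

definition connected_graph :: "'a set \<Rightarrow> ('a \<Rightarrow> 'a \<Rightarrow> bool) \<Rightarrow> bool" where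
  "connected_graph V E \<longleftrightarrow> (\<forall>x\<in>V. \<forall>y\<in>V. \<exists>n. walk E n x y)"

definition gdist :: "('a \<Rightarrow> 'a \<Rightarrow> bool) \<Rightarrow> 'a \<Rightarrow> 'a \<Rightarrow> nat" where
  "gdist E x y = (LEAST n. walk E n x y)"

definition Deg :: "'a set \<Rightarrow> ('a \<Rightarrow> 'a \<Rightarrow> bool) \<Rightarrow> 'a \<Rightarrow> nat" where
  "Deg V E x = card {y \<in> V. E x y}"

definition max_deg :: "'a set \<Rightarrow> ('a \<Rightarrow> 'a \<Rightarrow> bool) \<Rightarrow> nat" where
  "max_deg V E = Max (Deg V E ` V)"

definition diam_eff :: "'a set \<Rightarrow> ('a \<Rightarrow> 'a \<Rightarrow> bool) \<Rightarrow> real" where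
  "diam_eff V E = (\<Sum>x\<in>V. \<Sum>y\<in>V. real (gdist E x y)) / (real (card V))^2"

definition laplacian :: "'a set \<Rightarrow> ('a \<Rightarrow> 'a \<Rightarrow> bool) \<Rightarrow> ('a \<Rightarrow> real) \<Rightarrow> 'a \<Rightarrow> real" where
  "laplacian V E f x = (\<Sum>y\<in>{y \<in> V. E x y}. f y - f x)"

text \<open>Ollivier curvature (Lin--Lu--Yau / Muench--Wojciechowski formulation).\<close>
definition ollivier :: "'a set \<Rightarrow> ('a \<Rightarrow> 'a \<Rightarrow> bool) \<Rightarrow> 'a \<Rightarrow> 'a \<Rightarrow> real" where
  "ollivier V E x y = Inf {laplacian V E f x - laplacian V E f y | f.
      f y - f x = 1 \<and> Max {\<bar>f u - f v\<bar> | u v. u \<in> V \<and> v \<in> V \<and> E u v} = 1}"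

definition min_curv :: "'a set \<Rightarrow> ('a \<Rightarrow> 'a \<Rightarrow> bool) \<Rightarrow> real" where
  "min_curv V E = Min {ollivier V E x y | x y. x \<in> V \<and> y \<in> V \<and> E x y}"

definition closer :: "'a set \<Rightarrow> ('a \<Rightarrow> 'a \<Rightarrow> bool) \<Rightarrow> 'a \<Rightarrow> 'a \<Rightarrow> 'a set" where
  "closer V E x y = {v \<in> V. gdist E v x < gdist E v y}"

definition equidist :: "'a set \<Rightarrow> ('a \<Rightarrow> 'a \<Rightarrow> bool) \<Rightarrow> 'a \<Rightarrow> 'a \<Rightarrow> 'a set" where
  "equidist V E x y = {v \<in> V. gdist E v x = gdist E v y}"

definition automorphism :: "'a set \<Rightarrow> ('a \<Rightarrow> 'a \<Rightarrow> bool) \<Rightarrow> ('a \<Rightarrow> 'a) \<Rightarrow> bool" where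
  "automorphism V E \<phi> \<longleftrightarrow> bij_betw \<phi> V V \<and>
     (\<forall>u\<in>V. \<forall>v\<in>V. E u v \<longleftrightarrow> E (\<phi> u) (\<phi> v))"

definition reflection :: "'a set \<Rightarrow> ('a \<Rightarrow> 'a \<Rightarrow> bool) \<Rightarrow> 'a \<Rightarrow> 'a \<Rightarrow> ('a \<Rightarrow> 'a) \<Rightarrow> bool" where
  "reflection V E x y \<phi> \<longleftrightarrow> automorphism V E \<phi> \<and>
     (\<forall>v\<in>V. \<phi> (\<phi> v) = v) \<and> \<phi> x = y \<and>
     {{u, w} | u w. u \<in> closer V E x y \<and> w \<in> closer V E y x \<and> E u w}
       = {{x', \<phi> x'} | x'. x' \<in> closer V E x y} \<and>
     (\<forall>v\<in>equidist V E x y. \<phi> v = v)"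

definition reflective :: "'a set \<Rightarrow> ('a \<Rightarrow> 'a \<Rightarrow> bool) \<Rightarrow> bool" where
  "reflective V E \<longleftrightarrow> (\<forall>x y. E x y \<longrightarrow> (\<exists>\<phi>. reflection V E x y \<phi>))"

end

theory Submission
  imports Defs
begin

lemma walk_append: "walk E n x y \<Longrightarrow> walk E m y z \<Longrightarrow> walk E (n+m) x z"
  by (induction rule: walk.induct) (auto intro: walk.intros)

lemma walk_snoc: "walk E n x y \<Longrightarrow> E y z \<Longrightarrow> walk E (Suc n) x z"
  using walk_append[of E n x y 1 z] by (auto intro: walk.intros)

lemma walk_rev: assumes "\<forall>u v. E u v \<longrightarrow> E v u" "walk E n x y" shows "walk E n y x"
  using assms(2)
proof (induction rule: walk.induct)
  case (walk0 x)
  then show ?case by (rule walk.walk0)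
next
  case (walkS x z n y)
  have "E z x" using assms(1) walkS(1) by blast
  then show ?case using walk_snoc[OF walkS(3)] by simp
qed

locale G =
  fixes V :: "'a set" and E :: "'a \<Rightarrow> 'a \<Rightarrow> bool"
  assumes fsg: "finite_simple_graph V E"
    and conn: "connected_graph V E"
begin

lemma finV: "finite V" using fsg unfolding finite_simple_graph_def by auto
lemma EV1: "E u v \<Longrightarrow> u \<in> V" using fsg unfolding finite_simple_graph_def by auto
lemma EV2: "E u v \<Longrightarrow> v \<in> V" using fsg unfolding finite_simple_graph_def by auto
lemma Esym: "E u v \<Longrightarrow> E v u" using fsg unfolding finite_simple_graph_def by auto
lemma Eirr: "\<not> E u u" using fsg unfolding finite_simple_graph_def by auto
lemma Eneq: "E u v \<Longrightarrow> u \<noteq> v" using Eirr by auto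

lemma gdist_sym: "gdist E x y = gdist E y x"
proof -
  have sy: "\<forall>u v. E u v \<longrightarrow> E v u" using Esym by blast
  have "(\<lambda>n. walk E n x y) = (\<lambda>n. walk E n y x)"
  proof
    fix n show "walk E n x y = walk E n y x" using walk_rev[OF sy, of n x y] walk_rev[OF sy, of n y x] by blast
  qed
  then show ?thesis unfolding gdist_def by simp
qed

lemma gdist_walk: "x \<in> V \<Longrightarrow> y \<in> V \<Longrightarrow> walk E (gdist E x y) x y"
  using conn unfolding connected_graph_def gdist_def by (meson LeastI_ex)

lemma gdist_le: "walk E n x y \<Longrightarrow> gdist E x y \<le> n"
  unfolding gdist_def by (rule Least_le)

lemma gdist_refl[simp]: "gdist E x x = 0"
  using gdist_le[OF walk0[of E x]] by simp

lemma walk0_eq: "walk E 0 x y \<Longrightarrow> x = y"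
  by (erule walk.cases) auto

lemma walk1_E: "walk E (Suc 0) x y \<Longrightarrow> E x y"
  by (erule walk.cases) (auto dest: walk0_eq)

lemma gdist_0: "x \<in> V \<Longrightarrow> y \<in> V \<Longrightarrow> gdist E x y = 0 \<Longrightarrow> x = y"
  using gdist_walk[of x y] walk0_eq by simp

lemma gdist_tri: "x \<in> V \<Longrightarrow> y \<in> V \<Longrightarrow> z \<in> V \<Longrightarrow> gdist E x z \<le> gdist E x y + gdist E y z"
  using gdist_le[OF walk_append[OF gdist_walk[of x y] gdist_walk[of y z]]] by simp

lemma gdist_edge: "E x y \<Longrightarrow> gdist E x y = 1"
proof -
  assume e: "E x y"
  have "walk E 1 x y" using e by (auto intro: walk.intros)
  then have "gdist E x y \<le> 1" by (rule gdist_le)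
  moreover have "gdist E x y \<noteq> 0"
  proof
    assume "gdist E x y = 0"
    then have "x = y" using gdist_0[OF EV1[OF e] EV2[OF e]] by simp
    then show False using Eneq[OF e] by simp
  qed
  ultimately show ?thesis by simp
qed

lemma gdist_one: "x \<in> V \<Longrightarrow> y \<in> V \<Longrightarrow> gdist E x y = 1 \<Longrightarrow> E x y"
  using gdist_walk[of x y] walk1_E by simp

lemma gdist_lip: "E a b \<Longrightarrow> v \<in> V \<Longrightarrow> gdist E v b \<le> gdist E v a + 1"
  using gdist_tri[of v a b] gdist_edge[of a b] EV1[of a b] EV2[of a b] by simp

lemma gdist_lip_real: "E a b \<Longrightarrow> v \<in> V \<Longrightarrow> \<bar>real (gdist E v a) - real (gdist E v b)\<bar> \<le> 1"
proof -
  assume e: "E a b" and v: "v \<in> V"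
  have "gdist E v b \<le> gdist E v a + 1" using gdist_lip[OF e v] .
  moreover have "gdist E v a \<le> gdist E v b + 1" using gdist_lip[OF Esym[OF e] v] .
  ultimately show ?thesis by linarith
qed

lemma gdist_pred: "x \<in> V \<Longrightarrow> y \<in> V \<Longrightarrow> gdist E y x = Suc k \<Longrightarrow> \<exists>z. E y z \<and> gdist E z x = k"
proof -
  assume xy: "x \<in> V" "y \<in> V" and d: "gdist E y x = Suc k"
  have "walk E (Suc k) y x" using gdist_walk[OF xy(2,1)] d by simp
  then obtain z where z: "E y z" "walk E k z x" by (cases rule: walk.cases) auto
  have "gdist E z x \<le> k" using z(2) gdist_le by blast
  moreover have "Suc k \<le> 1 + gdist E z x"
    using gdist_tri[of y z x] xy z(1) EV2[of y z] gdist_edge[of y z] d by simp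
  ultimately show ?thesis using z(1) by (intro exI[of _ z]) simp
qed

definition N :: "'a \<Rightarrow> 'a set" where "N u = {w\<in>V. E u w}"

lemma finN: "finite (N u)" using finV unfolding N_def by auto

lemma lap_alt: "laplacian V E f x = (\<Sum>y\<in>N x. f y) - real (card (N x)) * f x"
  unfolding laplacian_def N_def[symmetric] by (simp add: sum_subtractf)

lemma lap_sum_zero: "(\<Sum>x\<in>V. laplacian V E f x) = 0"
proof -
  define h where "h x y = (if E x y then f y - f x else 0)" for x y
  have anti: "h x y = - h y x" for x y
  proof (cases "E x y")
    case True then have "E y x" by (rule Esym)
    then show ?thesis using True unfolding h_def by simp
  next
    case False then have "\<not> E y x" using Esym by blast
    then show ?thesis using False unfolding h_def by simp
  qed
  have s1: "(\<Sum>x\<in>V. laplacian V E f x) = (\<Sum>x\<in>V. \<Sum>y\<in>V. h x y)"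
    unfolding laplacian_def h_def using finV by (simp add: sum.inter_filter)
  have "(\<Sum>x\<in>V. laplacian V E f x) = (\<Sum>x\<in>V. \<Sum>y\<in>V. h x y)" by (rule s1)
  also have "\<dots> = (\<Sum>y\<in>V. \<Sum>x\<in>V. h x y)" by (rule sum.swap)
  also have "\<dots> = (\<Sum>y\<in>V. \<Sum>x\<in>V. - h y x)" by (intro sum.cong refl) (rule anti)
  also have "\<dots> = - (\<Sum>y\<in>V. \<Sum>x\<in>V. h y x)" by (simp add: sum_negf)
  finally have "(\<Sum>x\<in>V. laplacian V E f x) = - (\<Sum>x\<in>V. \<Sum>y\<in>V. h x y)" .
  with s1 show ?thesis by linarith
qed

end

lemma hall:
  fixes R :: "'a \<Rightarrow> 'b \<Rightarrow> bool"
  assumes "finite X" "finite Y" "\<And>S. S \<subseteq> X \<Longrightarrow> card S \<le> card {y\<in>Y. \<exists>x\<in>S. R x y}"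
  shows "\<exists>\<sigma>. inj_on \<sigma> X \<and> (\<forall>x\<in>X. \<sigma> x \<in> Y \<and> R x (\<sigma> x))"
  using assms
proof (induction "card X" arbitrary: X Y rule: less_induct)
  case less
  note fX = less.prems(1) and fY = less.prems(2) and hc = less.prems(3)
  show ?case
  proof (cases "X = {}")
    case True then show ?thesis by auto
  next
    case Xne: False
    show ?thesis
    proof (cases "\<exists>S. S \<subseteq> X \<and> S \<noteq> {} \<and> S \<noteq> X \<and> card {y\<in>Y. \<exists>x\<in>S. R x y} = card S")
      case True
      then obtain S where S: "S \<subseteq> X" "S \<noteq> {}" "S \<noteq> X" "card {y\<in>Y. \<exists>x\<in>S. R x y} = card S"
        by blast
      define NS where "NS = {y\<in>Y. \<exists>x\<in>S. R x y}"
      have fS: "finite S" using S(1) fX finite_subset by blast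
      have cS: "card S < card X" using S(1,3) fX by (meson psubsetI psubset_card_mono)
      have hcS: "card T \<le> card {y\<in>Y. \<exists>x\<in>T. R x y}" if "T \<subseteq> S" for T
        using hc that S(1) by (meson order_trans)
      obtain \<sigma>1 where s1: "inj_on \<sigma>1 S" "\<forall>x\<in>S. \<sigma>1 x \<in> Y \<and> R x (\<sigma>1 x)"
        using less.hyps[OF cS fS fY hcS] by blast
      have s1N: "\<forall>x\<in>S. \<sigma>1 x \<in> NS" unfolding NS_def using s1(2) by blast
      have fXS: "finite (X - S)" using fX by simp
      have cXS: "card (X - S) < card X"
      proof -
        have "card (X - S) = card X - card S" using card_Diff_subset[OF fS S(1)] .
        moreover have "card S > 0" using fS S(2) by (simp add: card_gt_0_iff)
        moreover have "card S \<le> card X" using cS by simp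
        ultimately show ?thesis by linarith
      qed
      have fNS: "finite NS" unfolding NS_def using fY by simp
      have hc2: "card T \<le> card {y\<in>Y - NS. \<exists>x\<in>T. R x y}" if T: "T \<subseteq> X - S" for T
      proof -
        have fT: "finite T" using T fXS finite_subset by blast
        have TS: "T \<union> S \<subseteq> X" using T S(1) by blast
        have h1: "card (T \<union> S) \<le> card {y\<in>Y. \<exists>x\<in>T \<union> S. R x y}" using hc[OF TS] .
        have eqs: "{y\<in>Y. \<exists>x\<in>T \<union> S. R x y} = {y\<in>Y - NS. \<exists>x\<in>T. R x y} \<union> NS"
          unfolding NS_def by blast
        have fA: "finite {y\<in>Y - NS. \<exists>x\<in>T. R x y}" using fY by simp
        have "card ({y\<in>Y - NS. \<exists>x\<in>T. R x y} \<union> NS) = card {y\<in>Y - NS. \<exists>x\<in>T. R x y} + card NS"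
          using fA fNS by (intro card_Un_disjoint) auto
        moreover have "card (T \<union> S) = card T + card S"
          using fT fS T by (intro card_Un_disjoint) auto
        moreover have "card NS = card S" unfolding NS_def using S(4) .
        ultimately show ?thesis using h1 eqs by simp
      qed
      have fYN: "finite (Y - NS)" using fY by simp
      obtain \<sigma>2 where s2: "inj_on \<sigma>2 (X - S)" "\<forall>x\<in>X - S. \<sigma>2 x \<in> Y - NS \<and> R x (\<sigma>2 x)"
        using less.hyps[OF cXS fXS fYN hc2] by blast
      define \<sigma> where "\<sigma> x = (if x \<in> S then \<sigma>1 x else \<sigma>2 x)" for x
      show ?thesis
      proof (intro exI conjI)
        show "inj_on \<sigma> X"
        proof (rule inj_onI)
          fix a b assume a: "a \<in> X" and b: "b \<in> X" and eq: "\<sigma> a = \<sigma> b"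
          show "a = b"
          proof (cases "a \<in> S")
            case aS: True
            show ?thesis
            proof (cases "b \<in> S")
              case True
              then show ?thesis using aS eq s1(1) unfolding \<sigma>_def by (simp add: inj_on_def)
            next
              case False
              then have "\<sigma> b \<notin> NS" using s2(2) b unfolding \<sigma>_def by auto
              moreover have "\<sigma> a \<in> NS" using s1N aS unfolding \<sigma>_def by auto
              ultimately show ?thesis using eq by simp
            qed
          next
            case aS: False
            show ?thesis
            proof (cases "b \<in> S")
              case True
              then have "\<sigma> b \<in> NS" using s1N unfolding \<sigma>_def by auto
              moreover have "\<sigma> a \<notin> NS" using s2(2) a aS unfolding \<sigma>_def by auto
              ultimately show ?thesis using eq by simp
            next
              case False
              then show ?thesis using aS eq s2(1) a b unfolding \<sigma>_def by (simp add: inj_on_def)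
            qed
          qed
        qed
        show "\<forall>x\<in>X. \<sigma> x \<in> Y \<and> R x (\<sigma> x)" using s1 s2 unfolding \<sigma>_def by auto
      qed
    next
      case False
      have strict: "card S < card {y\<in>Y. \<exists>x\<in>S. R x y}" if "S \<subseteq> X" "S \<noteq> {}" "S \<noteq> X" for S
        using hc[OF that(1)] False that by (metis le_neq_implies_less)
      obtain x0 where x0: "x0 \<in> X" using Xne by blast
      have "card {x0} \<le> card {y\<in>Y. \<exists>x\<in>{x0}. R x y}" using hc x0 by blast
      then have "card {y\<in>Y. R x0 y} \<noteq> 0" by simp
      then have "{y\<in>Y. R x0 y} \<noteq> {}" by (metis card.empty)
      then obtain y0 where y0: "y0 \<in> Y" "R x0 y0" by blast
      have fX0: "finite (X - {x0})" using fX by simp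
      have cX0: "card (X - {x0}) < card X" using fX x0 by (meson card_Diff1_less)
      have fY0: "finite (Y - {y0})" using fY by simp
      have hc3: "card T \<le> card {y\<in>Y - {y0}. \<exists>x\<in>T. R x y}" if T: "T \<subseteq> X - {x0}" for T
      proof (cases "T = {}")
        case True then show ?thesis by simp
      next
        case False
        have "T \<noteq> X" using T x0 by blast
        then have lt: "card T < card {y\<in>Y. \<exists>x\<in>T. R x y}" using strict[of T] T False by blast
        have "{y\<in>Y - {y0}. \<exists>x\<in>T. R x y} = {y\<in>Y. \<exists>x\<in>T. R x y} - {y0}" by blast
        moreover have "card ({y\<in>Y. \<exists>x\<in>T. R x y} - {y0}) \<ge> card {y\<in>Y. \<exists>x\<in>T. R x y} - 1"
          by (simp add: card_Diff_singleton_if)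
        ultimately show ?thesis using lt by simp
      qed
      obtain \<sigma>' where s': "inj_on \<sigma>' (X - {x0})" "\<forall>x\<in>X - {x0}. \<sigma>' x \<in> Y - {y0} \<and> R x (\<sigma>' x)"
        using less.hyps[OF cX0 fX0 fY0 hc3] by blast
      define \<sigma> where "\<sigma> = \<sigma>'(x0 := y0)"
      show ?thesis
      proof (intro exI conjI)
        show "inj_on \<sigma> X"
        proof (rule inj_onI)
          fix a b assume a: "a \<in> X" and b: "b \<in> X" and eq: "\<sigma> a = \<sigma> b"
          show "a = b"
          proof (cases "a = x0")
            case True
            then show ?thesis
            proof (cases "b = x0")
              case False
              then have "\<sigma> b \<noteq> y0" using s'(2) b unfolding \<sigma>_def by auto
              then show ?thesis using eq True unfolding \<sigma>_def by simp
            qed simp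
          next
            case ax: False
            show ?thesis
            proof (cases "b = x0")
              case True
              have "\<sigma> a \<noteq> y0" using s'(2) a ax unfolding \<sigma>_def by auto
              then show ?thesis using eq True unfolding \<sigma>_def by simp
            next
              case False
              then show ?thesis using ax a b eq s'(1) unfolding \<sigma>_def by (simp add: inj_on_def)
            qed
          qed
        qed
        show "\<forall>x\<in>X. \<sigma> x \<in> Y \<and> R x (\<sigma> x)" using s' y0 unfolding \<sigma>_def by auto
      qed
    qed
  qed
qed

context G
begin

lemma fin_edgeset: "finite {F a b | a b. a \<in> V \<and> b \<in> V \<and> E a b}"
proof -
  have "{F a b | a b. a \<in> V \<and> b \<in> V \<and> E a b} \<subseteq> (\<lambda>(a,b). F a b) ` (V \<times> V)" by auto
  moreover have "finite ((\<lambda>(a,b). F a b) ` (V \<times> V))" using finV by simp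
  ultimately show ?thesis by (rule finite_subset)
qed

lemma lap_bound:
  assumes "\<forall>a b. E a b \<longrightarrow> \<bar>g a - g b\<bar> \<le> 1"
  shows "\<bar>laplacian V E g u\<bar> \<le> real (card (N u))"
proof -
  have "\<bar>laplacian V E g u\<bar> = \<bar>\<Sum>w\<in>N u. g w - g u\<bar>" unfolding laplacian_def N_def by simp
  also have "\<dots> \<le> (\<Sum>w\<in>N u. \<bar>g w - g u\<bar>)" by (rule sum_abs)
  also have "\<dots> \<le> (\<Sum>w\<in>N u. 1)"
  proof (rule sum_mono)
    fix w assume "w \<in> N u"
    then have "E u w" unfolding N_def by auto
    then have "\<bar>g u - g w\<bar> \<le> 1" using assms by blast
    then show "\<bar>g w - g u\<bar> \<le> 1" by (simp add: abs_minus_commute)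
  qed
  finally show ?thesis by simp
qed

lemma curv_lb:
  assumes uv: "E u v" and lip: "\<forall>a b. E a b \<longrightarrow> \<bar>f a - f b\<bar> \<le> 1" and fd: "f v - f u = 1"
  shows "min_curv V E \<le> laplacian V E f u - laplacian V E f v"
proof -
  have M1: "Max {\<bar>f a - f b\<bar> | a b. a \<in> V \<and> b \<in> V \<and> E a b} = 1"
  proof (rule Max_eqI)
    show "finite {\<bar>f a - f b\<bar> | a b. a \<in> V \<and> b \<in> V \<and> E a b}" by (rule fin_edgeset)
    show "y \<le> 1" if "y \<in> {\<bar>f a - f b\<bar> | a b. a \<in> V \<and> b \<in> V \<and> E a b}" for y
      using that lip by blast
    have "E v u" using uv by (rule Esym)
    moreover have "\<bar>f v - f u\<bar> = 1" using fd by simp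
    ultimately show "1 \<in> {\<bar>f a - f b\<bar> | a b. a \<in> V \<and> b \<in> V \<and> E a b}"
      using EV1[OF uv] EV2[OF uv] by force
  qed
  define S where "S = {laplacian V E f u - laplacian V E f v | f.
      f v - f u = 1 \<and> Max {\<bar>f a - f b\<bar> | a b. a \<in> V \<and> b \<in> V \<and> E a b} = 1}"
  have mem: "laplacian V E f u - laplacian V E f v \<in> S" unfolding S_def using fd M1 by blast
  have bdd: "bdd_below S"
  proof (rule bdd_belowI)
    fix s assume "s \<in> S"
    then obtain g where s: "s = laplacian V E g u - laplacian V E g v"
      and g: "Max {\<bar>g a - g b\<bar> | a b. a \<in> V \<and> b \<in> V \<and> E a b} = 1"
      unfolding S_def by blast
    have glip: "\<forall>a b. E a b \<longrightarrow> \<bar>g a - g b\<bar> \<le> 1"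
    proof (intro allI impI)
      fix a b assume ab: "E a b"
      have "\<bar>g a - g b\<bar> \<in> {\<bar>g a - g b\<bar> | a b. a \<in> V \<and> b \<in> V \<and> E a b}"
        using ab EV1[OF ab] EV2[OF ab] by blast
      then have "\<bar>g a - g b\<bar> \<le> Max {\<bar>g a - g b\<bar> | a b. a \<in> V \<and> b \<in> V \<and> E a b}"
        using fin_edgeset by (intro Max_ge) auto
      then show "\<bar>g a - g b\<bar> \<le> 1" using g by simp
    qed
    have "\<bar>laplacian V E g u\<bar> \<le> real (card (N u))" using lap_bound[OF glip] .
    moreover have "\<bar>laplacian V E g v\<bar> \<le> real (card (N v))" using lap_bound[OF glip] .
    ultimately show "- (real (card (N u)) + real (card (N v))) \<le> s" unfolding s by linarith
  qed
  have "ollivier V E u v = Inf S" unfolding ollivier_def S_def by simp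
  also have "\<dots> \<le> laplacian V E f u - laplacian V E f v" using cInf_lower[OF mem bdd] .
  finally have o: "ollivier V E u v \<le> laplacian V E f u - laplacian V E f v" .
  have "min_curv V E \<le> ollivier V E u v"
    unfolding min_curv_def
    using fin_edgeset[of "ollivier V E"] uv EV1[OF uv] EV2[OF uv] by (intro Min_le) auto
  with o show ?thesis by linarith
qed

lemma Deg_N: "Deg V E x = card (N x)" unfolding Deg_def N_def by simp

lemma lap_dist_self:
  assumes x: "x \<in> V"
  shows "laplacian V E (\<lambda>w. real (gdist E x w)) x = real (Deg V E x)"
proof -
  have "laplacian V E (\<lambda>w. real (gdist E x w)) x = (\<Sum>w\<in>N x. 1)"
    unfolding laplacian_def N_def[symmetric]
  proof (intro sum.cong refl)
    fix w assume "w \<in> N x"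
    then have "E x w" unfolding N_def by simp
    then show "real (gdist E x w) - real (gdist E x x) = 1" using gdist_edge by simp
  qed
  then show ?thesis using Deg_N by simp
qed

lemma dist_lip: "x \<in> V \<Longrightarrow> \<forall>a b. E a b \<longrightarrow> \<bar>real (gdist E x a) - real (gdist E x b)\<bar> \<le> 1"
  using gdist_lip_real by blast

lemma tele:
  assumes x: "x \<in> V"
  shows "\<forall>y\<in>V. gdist E x y = k \<longrightarrow>
    min_curv V E * real k \<le> laplacian V E (\<lambda>w. real (gdist E x w)) x - laplacian V E (\<lambda>w. real (gdist E x w)) y"
proof (induction k)
  case 0
  show ?case
  proof (intro ballI impI)
    fix y assume "y \<in> V" "gdist E x y = 0"
    then have "x = y" using gdist_0 x by blast
    then show "min_curv V E * real 0 \<le> laplacian V E (\<lambda>w. real (gdist E x w)) x - laplacian V E (\<lambda>w. real (gdist E x w)) y" by simp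
  qed
next
  case (Suc k)
  show ?case
  proof (intro ballI impI)
    fix y assume y: "y \<in> V" and d: "gdist E x y = Suc k"
    have "gdist E y x = Suc k" using d gdist_sym by simp
    then obtain z where z: "E y z" "gdist E z x = k" using gdist_pred[OF x y] by blast
    have zV: "z \<in> V" using EV2[OF z(1)] .
    have dz: "gdist E x z = k" using z(2) gdist_sym by simp
    have c: "min_curv V E \<le> laplacian V E (\<lambda>w. real (gdist E x w)) z - laplacian V E (\<lambda>w. real (gdist E x w)) y"
      using curv_lb[OF Esym[OF z(1)] dist_lip[OF x]] d dz by simp
    have ih: "min_curv V E * real k \<le> laplacian V E (\<lambda>w. real (gdist E x w)) x - laplacian V E (\<lambda>w. real (gdist E x w)) z"
      using Suc.IH zV dz by blast
    show "min_curv V E * real (Suc k) \<le> laplacian V E (\<lambda>w. real (gdist E x w)) x - laplacian V E (\<lambda>w. real (gdist E x w)) y"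
      using c ih by (simp add: distrib_left)
  qed
qed

lemma tele': "x \<in> V \<Longrightarrow> y \<in> V \<Longrightarrow>
    min_curv V E * real (gdist E x y) \<le> real (Deg V E x) - laplacian V E (\<lambda>w. real (gdist E x w)) y"
  using tele[of x "gdist E x y"] lap_dist_self by simp

end

locale G2 = G +
  fixes x0 y0
  assumes e0: "E x0 y0" and Kpos: "min_curv V E > 0"
    and sharp: "diam_eff V E = real (max_deg V E) / min_curv V E"
begin

abbreviation "K \<equiv> min_curv V E"
abbreviation "D \<equiv> max_deg V E"

lemma Vne: "V \<noteq> {}" using EV1[OF e0] by blast

lemma Deg_le: "x \<in> V \<Longrightarrow> Deg V E x \<le> D"
  unfolding max_deg_def using finV by (intro Max_ge) auto

lemma main_eqs:
  shows "\<forall>x\<in>V. Deg V E x = D"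
    and "\<forall>x\<in>V. \<forall>y\<in>V. laplacian V E (\<lambda>w. real (gdist E x w)) y = real D - K * real (gdist E x y)"
proof -
  define n where "n = real (card V)"
  define s where "s x = (\<Sum>y\<in>V. real (gdist E x y))" for x
  have npos: "n > 0" unfolding n_def using finV Vne by (simp add: card_gt_0_iff)
  have t1: "(\<Sum>x\<in>V. s x) = diam_eff V E * (n * n)"
    using npos unfolding diam_eff_def s_def n_def by (simp add: power2_eq_square)
  have tot: "(\<Sum>x\<in>V. s x) = n * n * real D / K"
    unfolding t1 sharp by simp
  have each: "n * real (Deg V E x) - K * s x = (\<Sum>y\<in>V. real (Deg V E x) - laplacian V E (\<lambda>w. real (gdist E x w)) y - K * real (gdist E x y))"
    if x: "x \<in> V" for x
  proof -
    have "(\<Sum>y\<in>V. real (Deg V E x) - laplacian V E (\<lambda>w. real (gdist E x w)) y - K * real (gdist E x y))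
       = n * real (Deg V E x) - (\<Sum>y\<in>V. laplacian V E (\<lambda>w. real (gdist E x w)) y) - K * s x"
      unfolding s_def n_def by (simp add: sum_subtractf sum_distrib_left)
    then show ?thesis using lap_sum_zero by simp
  qed
  have terms: "real (Deg V E x) - laplacian V E (\<lambda>w. real (gdist E x w)) y - K * real (gdist E x y) \<ge> 0"
    if "x \<in> V" "y \<in> V" for x y using tele'[OF that] by simp
  have ge: "n * real (Deg V E x) - K * s x \<ge> 0" if "x \<in> V" for x
    using each[OF that] terms that by (simp add: sum_nonneg)
  have ge2: "n * real D - K * s x \<ge> 0" if "x \<in> V" for x
  proof -
    have "real (Deg V E x) \<le> real D" using Deg_le[OF that] by simp
    then have "n * real (Deg V E x) \<le> n * real D" using npos by simp
    then show ?thesis using ge[OF that] by linarith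
  qed
  have "(\<Sum>x\<in>V. n * real D - K * s x) = (\<Sum>x\<in>V. n * real D) - (\<Sum>x\<in>V. K * s x)"
    by (rule sum_subtractf)
  also have "\<dots> = n * n * real D - K * (\<Sum>x\<in>V. s x)"
    unfolding n_def by (simp only: sum_constant sum_distrib_left[symmetric])
  also have "\<dots> = n * n * real D - K * (n * n * real D / K)" unfolding tot ..
  also have "\<dots> = 0" using Kpos by simp
  finally have sz: "(\<Sum>x\<in>V. n * real D - K * s x) = 0" .
  have iff: "(\<Sum>x\<in>V. n * real D - K * s x) = 0 \<longleftrightarrow> (\<forall>x\<in>V. n * real D - K * s x = 0)"
    by (rule sum_nonneg_eq_0_iff[OF finV]) (rule ge2)
  have z: "\<forall>x\<in>V. n * real D - K * s x = 0" using iff sz by blast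
  have degeq: "real (Deg V E x) = real D" if x: "x \<in> V" for x
  proof -
    have zx: "n * real D - K * s x = 0" using z x by blast
    have "n * real (Deg V E x) - K * s x \<ge> 0" using ge[OF x] .
    then have "n * real (Deg V E x) \<ge> n * real D" using zx by linarith
    then have "real (Deg V E x) \<ge> real D" using npos by simp
    moreover have "real (Deg V E x) \<le> real D" using Deg_le[OF x] by simp
    ultimately show ?thesis by linarith
  qed
  then show "\<forall>x\<in>V. Deg V E x = D" by simp
  show "\<forall>x\<in>V. \<forall>y\<in>V. laplacian V E (\<lambda>w. real (gdist E x w)) y = real D - K * real (gdist E x y)"
  proof (intro ballI)
    fix x y assume x: "x \<in> V" and y: "y \<in> V"
    have zx: "n * real D - K * s x = 0" using z x by blast
    have e0: "n * real (Deg V E x) - K * s x = 0" using zx degeq[OF x] by simp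
    have iff2: "(\<Sum>y\<in>V. real (Deg V E x) - laplacian V E (\<lambda>w. real (gdist E x w)) y - K * real (gdist E x y)) = 0
       \<longleftrightarrow> (\<forall>y\<in>V. real (Deg V E x) - laplacian V E (\<lambda>w. real (gdist E x w)) y - K * real (gdist E x y) = 0)"
      by (rule sum_nonneg_eq_0_iff[OF finV]) (rule terms[OF x])
    have "(\<Sum>y\<in>V. real (Deg V E x) - laplacian V E (\<lambda>w. real (gdist E x w)) y - K * real (gdist E x y)) = 0"
      using each[OF x] e0 by simp
    then have "real (Deg V E x) - laplacian V E (\<lambda>w. real (gdist E x w)) y - K * real (gdist E x y) = 0"
      using iff2 y by blast
    then show "laplacian V E (\<lambda>w. real (gdist E x w)) y = real D - K * real (gdist E x y)"
      using degeq[OF x] by simp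
  qed
qed

lemma reg: "x \<in> V \<Longrightarrow> card (N x) = D" using main_eqs(1) Deg_N by simp

lemma lapL: "x \<in> V \<Longrightarrow> y \<in> V \<Longrightarrow> laplacian V E (\<lambda>w. real (gdist E x w)) y = real D - K * real (gdist E x y)"
  using main_eqs(2) by blast

end

context G
begin

definition Xs :: "'a \<Rightarrow> 'a \<Rightarrow> 'a set" where "Xs p q = {z\<in>V. E p z \<and> z \<noteq> q \<and> \<not> E q z}"
definition Tc :: "'a \<Rightarrow> 'a \<Rightarrow> 'a set" where "Tc p q = {z\<in>V. E p z \<and> E q z}"

lemma finXs: "finite (Xs p q)" using finV unfolding Xs_def by auto
lemma finTc: "finite (Tc p q)" using finV unfolding Tc_def by auto
lemma Tc_sym: "Tc p q = Tc q p" unfolding Tc_def by auto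

lemma Nsplit: "E p q \<Longrightarrow> N p = insert q (Tc p q \<union> Xs p q)"
  unfolding N_def Tc_def Xs_def using EV2[of p q] by auto

lemma sumN: assumes pq: "E p q"
  shows "(\<Sum>w\<in>N p. g w) = g q + (\<Sum>w\<in>Tc p q. g w) + (\<Sum>w\<in>Xs p q. g w)"
proof -
  have qn: "q \<notin> Tc p q \<union> Xs p q" unfolding Tc_def Xs_def using Eirr by auto
  have dj: "Tc p q \<inter> Xs p q = {}" unfolding Tc_def Xs_def by auto
  have "(\<Sum>w\<in>N p. g w) = g q + (\<Sum>w\<in>Tc p q \<union> Xs p q. g w)"
    unfolding Nsplit[OF pq] using qn finTc finXs by (simp add: sum.insert)
  also have "(\<Sum>w\<in>Tc p q \<union> Xs p q. g w) = (\<Sum>w\<in>Tc p q. g w) + (\<Sum>w\<in>Xs p q. g w)"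
    using dj finTc finXs by (simp add: sum.union_disjoint)
  finally show ?thesis by (simp add: add.assoc)
qed

end

context G2
begin

lemma lap_diff: assumes pq: "E p q"
  shows "laplacian V E g p - laplacian V E g q
    = (1 + real D) * (g q - g p) + (\<Sum>w\<in>Xs p q. g w) - (\<Sum>w\<in>Xs q p. g w)"
proof -
  have qp: "E q p" using Esym[OF pq] .
  have cp: "card (N p) = D" using reg[OF EV1[OF pq]] .
  have cq: "card (N q) = D" using reg[OF EV2[OF pq]] .
  have "laplacian V E g p = g q + (\<Sum>w\<in>Tc p q. g w) + (\<Sum>w\<in>Xs p q. g w) - real D * g p"
    unfolding lap_alt sumN[OF pq] cp ..
  moreover have "laplacian V E g q = g p + (\<Sum>w\<in>Tc p q. g w) + (\<Sum>w\<in>Xs q p. g w) - real D * g q"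
    unfolding lap_alt sumN[OF qp] cq Tc_sym[of q p] ..
  ultimately show ?thesis by (simp add: algebra_simps)
qed

lemma dist_ident: assumes pq: "E p q" and v: "v \<in> V"
  shows "(\<Sum>w\<in>Xs q p. real (gdist E v w)) - (\<Sum>w\<in>Xs p q. real (gdist E v w))
     = (1 + real D - K) * (real (gdist E v q) - real (gdist E v p))"
proof -
  have "laplacian V E (\<lambda>w. real (gdist E v w)) p - laplacian V E (\<lambda>w. real (gdist E v w)) q
     = K * (real (gdist E v q) - real (gdist E v p))"
    using lapL[OF v EV1[OF pq]] lapL[OF v EV2[OF pq]] by (simp add: algebra_simps)
  then show ?thesis using lap_diff[OF pq, of "\<lambda>w. real (gdist E v w)"] by (simp add: algebra_simps)
qed

lemma Xs_d1: "z \<in> Xs p q \<Longrightarrow> gdist E p z = 1"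
  unfolding Xs_def using gdist_edge by auto

lemma Xs_d2: assumes pq: "E p q" and w: "w \<in> Xs q p" shows "gdist E p w = 2"
proof -
  have w1: "w \<in> V" "E q w" "w \<noteq> p" "\<not> E p w" using w unfolding Xs_def by auto
  have pV: "p \<in> V" "q \<in> V" using EV1[OF pq] EV2[OF pq] by auto
  have "gdist E p w \<le> gdist E p q + gdist E q w" using gdist_tri pV w1 by blast
  then have le: "gdist E p w \<le> 2" using gdist_edge[OF pq] gdist_edge[OF w1(2)] by simp
  have n0: "gdist E p w \<noteq> 0" using gdist_0[OF pV(1) w1(1)] w1(3) by auto
  have n1: "gdist E p w \<noteq> 1" using gdist_one[OF pV(1) w1(1)] w1(4) by auto
  show ?thesis using le n0 n1 by linarith
qed

definition mm where "mm = 1 + real D - K"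

lemma cardX: assumes pq: "E p q"
  shows "real (card (Xs p q)) = mm" and "card (Xs q p) = card (Xs p q)"
proof -
  have qp: "E q p" using Esym[OF pq] .
  have pV: "p \<in> V" "q \<in> V" using EV1[OF pq] EV2[OF pq] by auto
  have a: "(\<Sum>w\<in>Xs q p. real (gdist E p w)) = 2 * real (card (Xs q p))"
    using Xs_d2[OF pq] by simp
  have b: "(\<Sum>w\<in>Xs p q. real (gdist E p w)) = real (card (Xs p q))"
    using Xs_d1[of _ p q] by simp
  have c: "(\<Sum>w\<in>Xs p q. real (gdist E q w)) = 2 * real (card (Xs p q))"
    using Xs_d2[OF qp] by simp
  have d: "(\<Sum>w\<in>Xs q p. real (gdist E q w)) = real (card (Xs q p))"
    using Xs_d1[of _ q p] by simp
  have e1: "2 * real (card (Xs q p)) - real (card (Xs p q)) = mm"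
    using dist_ident[OF pq pV(1)] a b gdist_edge[OF pq] unfolding mm_def by simp
  have e2: "real (card (Xs q p)) - 2 * real (card (Xs p q)) = - mm"
    using dist_ident[OF pq pV(2)] c d gdist_edge[OF qp] unfolding mm_def by simp
  show "real (card (Xs p q)) = mm" using e1 e2 by linarith
  have "real (card (Xs q p)) = real (card (Xs p q))" using e1 e2 by linarith
  then show "card (Xs q p) = card (Xs p q)" by simp
qed

end

lemma min_lip: "\<bar>(a::real) - c\<bar> \<le> 1 \<Longrightarrow> \<bar>b - d\<bar> \<le> 1 \<Longrightarrow> \<bar>min a b - min c d\<bar> \<le> 1"
proof (cases "a \<le> b")
  case True
  assume h: "\<bar>a - c\<bar> \<le> 1" "\<bar>b - d\<bar> \<le> 1"
  show ?thesis
  proof (cases "c \<le> d")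
    case True
    then show ?thesis using \<open>a \<le> b\<close> h by (simp add: min_def)
  next
    case False
    then have "min c d = d" by simp
    moreover have "min a b = a" using \<open>a \<le> b\<close> by simp
    ultimately show ?thesis using h False \<open>a \<le> b\<close> by (simp add: abs_le_iff)
  qed
next
  case False
  assume h: "\<bar>a - c\<bar> \<le> 1" "\<bar>b - d\<bar> \<le> 1"
  show ?thesis
  proof (cases "c \<le> d")
    case True
    then have "min c d = c" by simp
    moreover have "min a b = b" using False by simp
    ultimately show ?thesis using h False True by (simp add: abs_le_iff)
  next
    case False
    then show ?thesis using \<open>\<not> a \<le> b\<close> h by (simp add: min_def)
  qed
qed

lemma all_one:
  fixes a :: "'b \<Rightarrow> real"
  assumes "finite X" "(\<Sum>z\<in>X. a z) = real (card X)" "\<forall>z\<in>X. a z \<le> 1"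
  shows "\<forall>z\<in>X. a z = 1"
proof -
  have s0: "(\<Sum>z\<in>X. 1 - a z) = 0"
  proof -
    have "(\<Sum>z\<in>X. 1 - a z) = (\<Sum>z\<in>X. 1) - (\<Sum>z\<in>X. a z)" by (rule sum_subtractf)
    then show ?thesis using assms(2) by simp
  qed
  have iff: "(\<Sum>z\<in>X. 1 - a z) = 0 \<longleftrightarrow> (\<forall>z\<in>X. 1 - a z = 0)"
    by (rule sum_nonneg_eq_0_iff[OF assms(1)]) (use assms(3) in simp)
  show ?thesis
  proof
    fix z assume "z \<in> X"
    then have "1 - a z = 0" using iff s0 by blast
    then show "a z = 1" by simp
  qed
qed

context G2
begin

definition sd :: "'a set \<Rightarrow> 'a \<Rightarrow> nat" where "sd S u = Min ((\<lambda>s. gdist E u s) ` S)"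

lemma sd_le: "finite S \<Longrightarrow> s \<in> S \<Longrightarrow> sd S u \<le> gdist E u s"
  unfolding sd_def by (rule Min_le) auto

lemma sd_ex: "finite S \<Longrightarrow> S \<noteq> {} \<Longrightarrow> \<exists>s\<in>S. sd S u = gdist E u s"
proof -
  assume "finite S" "S \<noteq> {}"
  then have "sd S u \<in> (\<lambda>s. gdist E u s) ` S" unfolding sd_def by (intro Min_in) auto
  then show ?thesis by auto
qed

lemma sd_const: "finite S \<Longrightarrow> S \<noteq> {} \<Longrightarrow> \<forall>s\<in>S. gdist E u s = c \<Longrightarrow> sd S u = c"
proof -
  assume a: "finite S" "S \<noteq> {}" "\<forall>s\<in>S. gdist E u s = c"
  then obtain s where "s \<in> S" "sd S u = gdist E u s" using sd_ex by blast
  then show ?thesis using a(3) by simp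
qed

lemma sd_lip: assumes S: "finite S" "S \<noteq> {}" "S \<subseteq> V" and ab: "E a b"
  shows "sd S a \<le> sd S b + 1"
proof -
  obtain s where s: "s \<in> S" "sd S b = gdist E b s" using sd_ex[OF S(1,2)] by blast
  have "gdist E a s \<le> gdist E a b + gdist E b s"
    using gdist_tri EV1[OF ab] EV2[OF ab] s(1) S(3) by blast
  then have "gdist E a s \<le> 1 + sd S b" using gdist_edge[OF ab] s(2) by simp
  moreover have "sd S a \<le> gdist E a s" using sd_le[OF S(1) s(1)] .
  ultimately show ?thesis by simp
qed

lemma sd_lip_real: assumes S: "finite S" "S \<noteq> {}" "S \<subseteq> V" and ab: "E a b"
  shows "\<bar>real (sd S a) - real (sd S b)\<bar> \<le> 1"
  using sd_lip[OF S ab] sd_lip[OF S Esym[OF ab]] by linarith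

lemma sd_ge1: assumes S: "finite S" "S \<noteq> {}" "S \<subseteq> V" and u: "u \<in> V" "u \<notin> S"
  shows "sd S u \<ge> 1"
proof -
  obtain s where s: "s \<in> S" "sd S u = gdist E u s" using sd_ex[OF S(1,2)] by blast
  have "gdist E u s \<noteq> 0" using gdist_0[OF u(1)] s(1) S(3) u(2) by blast
  then show ?thesis using s by simp
qed

lemma sd_ge2: assumes S: "finite S" "S \<noteq> {}" "S \<subseteq> V" and u: "u \<in> V" "u \<notin> S"
  and ne: "\<forall>s\<in>S. \<not> E u s"
  shows "sd S u \<ge> 2"
proof -
  obtain s where s: "s \<in> S" "sd S u = gdist E u s" using sd_ex[OF S(1,2)] by blast
  have sV: "s \<in> V" using s(1) S(3) by blast
  have "gdist E u s \<noteq> 0" using gdist_0[OF u(1) sV] s(1) u(2) by blast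
  moreover have "gdist E u s \<noteq> 1" using gdist_one[OF u(1) sV] ne s(1) by blast
  ultimately show ?thesis using s by simp
qed

lemma XsV: "Xs p q \<subseteq> V" unfolding Xs_def by auto

lemma hall_cond: assumes pq: "E p q" and SX: "S \<subseteq> Xs p q"
  shows "card S \<le> card {w\<in>Xs q p. \<exists>z\<in>S. E z w}"
proof (cases "S = {}")
  case True then show ?thesis by simp
next
  case Sne: False
  define X where "X = Xs p q"
  define Y where "Y = Xs q p"
  define NS where "NS = {w\<in>Y. \<exists>z\<in>S. E z w}"
  have fX: "finite X" unfolding X_def by (rule finXs)
  have fY: "finite Y" unfolding Y_def by (rule finXs)
  have fS: "finite S" using SX finXs finite_subset by blast
  have Xne: "X \<noteq> {}" using SX Sne unfolding X_def by blast
  have XV: "X \<subseteq> V" unfolding X_def by (rule XsV)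
  have SV: "S \<subseteq> V" using SX XsV by blast
  have SX': "S \<subseteq> X" using SX unfolding X_def .
  define f where "f u = min (real (sd S u) - 1) (real (sd X u))" for u
  have flip: "\<forall>a b. E a b \<longrightarrow> \<bar>f a - f b\<bar> \<le> 1"
  proof (intro allI impI)
    fix a b assume ab: "E a b"
    have h1: "\<bar>(real (sd S a) - 1) - (real (sd S b) - 1)\<bar> \<le> 1"
      using sd_lip_real[OF fS Sne SV ab] by simp
    have h2: "\<bar>real (sd X a) - real (sd X b)\<bar> \<le> 1" using sd_lip_real[OF fX Xne XV ab] .
    show "\<bar>f a - f b\<bar> \<le> 1" unfolding f_def using min_lip[OF h1 h2] .
  qed
  have qp: "E q p" using Esym[OF pq] .
  have sSp: "sd S p = 1" using sd_const[OF fS Sne] Xs_d1 SX by blast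
  have sXp: "sd X p = 1" using sd_const[OF fX Xne] Xs_d1 unfolding X_def by blast
  have sSq: "sd S q = 2" using sd_const[OF fS Sne] Xs_d2[OF qp] SX by blast
  have sXq: "sd X q = 2" using sd_const[OF fX Xne] Xs_d2[OF qp] unfolding X_def by blast
  have fp: "f p = 0" unfolding f_def sSp sXp by simp
  have fq: "f q = 1" unfolding f_def sSq sXq by simp
  have c: "K \<le> laplacian V E f p - laplacian V E f q" using curv_lb[OF pq flip] fp fq by simp
  have ld: "laplacian V E f p - laplacian V E f q = (1 + real D) + (\<Sum>w\<in>X. f w) - (\<Sum>w\<in>Y. f w)"
    using lap_diff[OF pq, of f] fp fq unfolding X_def Y_def by simp
  have cx: "real (card X) = mm" unfolding X_def using cardX(1)[OF pq] .
  have cy: "card Y = card X" unfolding X_def Y_def using cardX(2)[OF pq] .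
  have main: "(\<Sum>w\<in>Y. f w) - (\<Sum>w\<in>X. f w) \<le> real (card Y)"
    using c ld cx cy unfolding mm_def by simp
  have fS1: "f z \<le> -1" if "z \<in> S" for z
  proof -
    have "sd S z \<le> gdist E z z" using sd_le[OF fS that] .
    then have "sd S z = 0" by simp
    then show ?thesis unfolding f_def by simp
  qed
  have fX0: "f z \<le> 0" if "z \<in> X" for z
  proof -
    have "sd X z \<le> gdist E z z" using sd_le[OF fX that] .
    then have "sd X z = 0" by simp
    then show ?thesis unfolding f_def by simp
  qed
  have YnX: "w \<notin> X" if "w \<in> Y" for w
    using that unfolding X_def Y_def Xs_def by auto
  have YV: "w \<in> V" if "w \<in> Y" for w using that unfolding Y_def Xs_def by auto
  have fY0: "f w \<ge> 0" if w: "w \<in> Y" for w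
  proof -
    have "sd S w \<ge> 1" using sd_ge1[OF fS Sne SV YV[OF w]] YnX[OF w] SX' by blast
    moreover have "sd X w \<ge> 1" using sd_ge1[OF fX Xne XV YV[OF w] YnX[OF w]] .
    ultimately show ?thesis unfolding f_def by simp
  qed
  have fY1: "f w \<ge> 1" if w: "w \<in> Y - NS" for w
  proof -
    have wY: "w \<in> Y" using w by simp
    have ne: "\<forall>s\<in>S. \<not> E w s"
    proof
      fix s assume s: "s \<in> S"
      show "\<not> E w s"
      proof
        assume "E w s"
        then have "E s w" by (rule Esym)
        then have "w \<in> NS" unfolding NS_def using wY s by blast
        then show False using w by simp
      qed
    qed
    have "sd S w \<ge> 2" using sd_ge2[OF fS Sne SV YV[OF wY] _ ne] YnX[OF wY] SX' by blast
    moreover have "sd X w \<ge> 1" using sd_ge1[OF fX Xne XV YV[OF wY] YnX[OF wY]] .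
    ultimately show ?thesis unfolding f_def by simp
  qed
  have NSY: "NS \<subseteq> Y" unfolding NS_def by blast
  have fNS: "finite NS" using NSY fY finite_subset by blast
  have sx: "(\<Sum>w\<in>X. f w) \<le> - real (card S)"
  proof -
    have "(\<Sum>w\<in>X. f w) = (\<Sum>w\<in>S. f w) + (\<Sum>w\<in>X - S. f w)"
      using fX SX' by (metis sum.subset_diff add.commute)
    moreover have "(\<Sum>w\<in>S. f w) \<le> (\<Sum>w\<in>S. -1)" using fS1 by (intro sum_mono) auto
    moreover have "(\<Sum>w\<in>X - S. f w) \<le> (\<Sum>w\<in>X - S. 0)" using fX0 by (intro sum_mono) auto
    ultimately show ?thesis by simp
  qed
  have sy: "(\<Sum>w\<in>Y. f w) \<ge> real (card (Y - NS))"
  proof -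
    have "(\<Sum>w\<in>Y. f w) = (\<Sum>w\<in>NS. f w) + (\<Sum>w\<in>Y - NS. f w)"
      using fY NSY by (metis sum.subset_diff add.commute)
    moreover have "(\<Sum>w\<in>NS. f w) \<ge> (\<Sum>w\<in>NS. 0)" using fY0 NSY by (intro sum_mono) auto
    moreover have "(\<Sum>w\<in>Y - NS. f w) \<ge> (\<Sum>w\<in>Y - NS. 1)" using fY1 by (intro sum_mono) auto
    ultimately show ?thesis by simp
  qed
  have "card (Y - NS) = card Y - card NS" using card_Diff_subset[OF fNS NSY] .
  moreover have "card NS \<le> card Y" using card_mono[OF fY NSY] .
  ultimately have "real (card (Y - NS)) = real (card Y) - real (card NS)" by simp
  then have "real (card S) \<le> real (card NS)" using main sx sy by linarith
  then show ?thesis unfolding NS_def Y_def by simp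
qed

lemma matching: assumes pq: "E p q"
  shows "\<exists>\<sigma>. bij_betw \<sigma> (Xs p q) (Xs q p) \<and> (\<forall>z\<in>Xs p q. E z (\<sigma> z))"
proof -
  obtain \<sigma> where s: "inj_on \<sigma> (Xs p q)" "\<forall>x\<in>Xs p q. \<sigma> x \<in> Xs q p \<and> E x (\<sigma> x)"
  proof -
    have "\<exists>\<sigma>. inj_on \<sigma> (Xs p q) \<and> (\<forall>x\<in>Xs p q. \<sigma> x \<in> Xs q p \<and> E x (\<sigma> x))"
      by (rule hall[OF finXs finXs hall_cond[OF pq]])
    then show ?thesis using that by blast
  qed
  have sub: "\<sigma> ` Xs p q \<subseteq> Xs q p" using s(2) by blast
  have "card (\<sigma> ` Xs p q) = card (Xs q p)" using card_image[OF s(1)] cardX(2)[OF pq] by simp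
  then have "\<sigma> ` Xs p q = Xs q p" using card_subset_eq[OF finXs sub] by simp
  then have "bij_betw \<sigma> (Xs p q) (Xs q p)" using s(1) unfolding bij_betw_def by simp
  then show ?thesis using s(2) by blast
qed

lemma tight:
  assumes pq: "E p q" and bij: "bij_betw \<sigma> (Xs p q) (Xs q p)" and adj: "\<forall>z\<in>Xs p q. E z (\<sigma> z)"
    and v: "v \<in> V"
  shows "gdist E v p < gdist E v q \<Longrightarrow> \<forall>z\<in>Xs p q. gdist E v (\<sigma> z) = gdist E v z + 1"
    and "gdist E v q < gdist E v p \<Longrightarrow> \<forall>z\<in>Xs p q. gdist E v z = gdist E v (\<sigma> z) + 1"
proof -
  have re: "(\<Sum>w\<in>Xs q p. real (gdist E v w)) = (\<Sum>z\<in>Xs p q. real (gdist E v (\<sigma> z)))"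
    using sum.reindex_bij_betw[OF bij, of "\<lambda>w. real (gdist E v w)"] by simp
  have di: "(\<Sum>z\<in>Xs p q. real (gdist E v (\<sigma> z)) - real (gdist E v z))
      = mm * (real (gdist E v q) - real (gdist E v p))"
    using dist_ident[OF pq v] re unfolding mm_def by (simp add: sum_subtractf)
  have cx: "real (card (Xs p q)) = mm" using cardX(1)[OF pq] .
  have l1: "gdist E v (\<sigma> z) \<le> gdist E v z + 1" if "z \<in> Xs p q" for z
    using gdist_lip[OF adj[rule_format, OF that] v] .
  have l2: "gdist E v z \<le> gdist E v (\<sigma> z) + 1" if "z \<in> Xs p q" for z
    using gdist_lip[OF Esym[OF adj[rule_format, OF that]] v] .
  show "gdist E v p < gdist E v q \<Longrightarrow> \<forall>z\<in>Xs p q. gdist E v (\<sigma> z) = gdist E v z + 1"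
  proof -
    assume lt: "gdist E v p < gdist E v q"
    have "gdist E v q \<le> gdist E v p + 1" using gdist_lip[OF pq v] .
    then have "real (gdist E v q) - real (gdist E v p) = 1" using lt by simp
    then have "(\<Sum>z\<in>Xs p q. real (gdist E v (\<sigma> z)) - real (gdist E v z)) = real (card (Xs p q))"
      using di cx by simp
    moreover have "\<forall>z\<in>Xs p q. real (gdist E v (\<sigma> z)) - real (gdist E v z) \<le> 1" using l1 by fastforce
    ultimately have "\<forall>z\<in>Xs p q. real (gdist E v (\<sigma> z)) - real (gdist E v z) = 1"
      using all_one[OF finXs] by blast
    then show ?thesis by auto
  qed
  show "gdist E v q < gdist E v p \<Longrightarrow> \<forall>z\<in>Xs p q. gdist E v z = gdist E v (\<sigma> z) + 1"
  proof -
    assume lt: "gdist E v q < gdist E v p"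
    have "gdist E v p \<le> gdist E v q + 1" using gdist_lip[OF Esym[OF pq] v] .
    then have "real (gdist E v q) - real (gdist E v p) = -1" using lt by simp
    then have "(\<Sum>z\<in>Xs p q. real (gdist E v z) - real (gdist E v (\<sigma> z))) = real (card (Xs p q))"
      using di cx by (simp add: sum_subtractf)
    moreover have "\<forall>z\<in>Xs p q. real (gdist E v z) - real (gdist E v (\<sigma> z)) \<le> 1" using l2 by fastforce
    ultimately have "\<forall>z\<in>Xs p q. real (gdist E v z) - real (gdist E v (\<sigma> z)) = 1"
      using all_one[OF finXs] by blast
    then show ?thesis by auto
  qed
qed

lemma key:
  assumes pq: "E p q" and z: "z \<in> Xs p q" and w: "w \<in> Xs q p" and zw: "E z w"
  shows "closer V E p q \<subseteq> closer V E z w \<and> closer V E q p \<subseteq> closer V E w z"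
proof -
  obtain \<sigma> where bij: "bij_betw \<sigma> (Xs p q) (Xs q p)" and adj: "\<forall>z\<in>Xs p q. E z (\<sigma> z)"
    using matching[OF pq] by blast
  have wV: "w \<in> V" using w unfolding Xs_def by auto
  have wq0: "E q w" using w unfolding Xs_def by auto
  have wq: "gdist E w q = 1" using gdist_edge[OF Esym[OF wq0]] .
  have wp: "gdist E w p = 2" using Xs_d2[OF pq w] gdist_sym[of w p] by simp
  have "gdist E w z = gdist E w (\<sigma> z) + 1" using tight(2)[OF pq bij adj wV] wq wp z by simp
  moreover have "gdist E w z = 1" using gdist_edge[OF Esym[OF zw]] .
  ultimately have "gdist E w (\<sigma> z) = 0" by simp
  moreover have "\<sigma> z \<in> V" using bij z unfolding bij_betw_def Xs_def by auto
  ultimately have sz: "\<sigma> z = w" using gdist_0[OF wV] by metis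
  have A: "closer V E p q \<subseteq> closer V E z w"
  proof
    fix v assume "v \<in> closer V E p q"
    then have v: "v \<in> V" "gdist E v p < gdist E v q" unfolding closer_def by auto
    have "gdist E v (\<sigma> z) = gdist E v z + 1" using tight(1)[OF pq bij adj v(1) v(2)] z by blast
    then show "v \<in> closer V E z w" unfolding closer_def using v(1) sz by simp
  qed
  have B: "closer V E q p \<subseteq> closer V E w z"
  proof
    fix v assume "v \<in> closer V E q p"
    then have v: "v \<in> V" "gdist E v q < gdist E v p" unfolding closer_def by auto
    have "gdist E v z = gdist E v (\<sigma> z) + 1" using tight(2)[OF pq bij adj v(1) v(2)] z by blast
    then show "v \<in> closer V E w z" unfolding closer_def using v(1) sz by simp
  qed
  show ?thesis using A B by blast
qed

lemma cut_eq:
  assumes pq: "E p q" and z: "z \<in> Xs p q" and w: "w \<in> Xs q p" and zw: "E z w"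
  shows "closer V E z w = closer V E p q \<and> closer V E w z = closer V E q p"
proof -
  have z1: "z \<in> V" "E p z" "z \<noteq> q" "\<not> E q z" using z unfolding Xs_def by auto
  have w1: "w \<in> V" "E q w" "w \<noteq> p" "\<not> E p w" using w unfolding Xs_def by auto
  have p2: "p \<in> Xs z w"
  proof -
    have "\<not> E w p" using w1(4) Esym by blast
    then show ?thesis unfolding Xs_def using EV1[OF pq] Esym[OF z1(2)] w1(3) by auto
  qed
  have q2: "q \<in> Xs w z"
  proof -
    have "\<not> E z q" using z1(4) Esym by blast
    then show ?thesis unfolding Xs_def using EV2[OF pq] Esym[OF w1(2)] z1(3) by auto
  qed
  have "closer V E z w \<subseteq> closer V E p q \<and> closer V E w z \<subseteq> closer V E q p"
    using key[OF zw p2 q2 pq] .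
  then show ?thesis using key[OF pq z w zw] by blast
qed

end

context G2
begin

lemma closerV: "closer V E a b \<subseteq> V" unfolding closer_def by auto

lemma propagate:
  assumes xy: "E x y"
  shows "\<forall>p\<in>V. gdist E p x = k \<longrightarrow> p \<in> closer V E x y \<longrightarrow>
    (\<exists>q. E p q \<and> closer V E p q = closer V E x y \<and> closer V E q p = closer V E y x)"
proof (induction k)
  case 0
  show ?case
  proof (intro ballI impI)
    fix p assume p: "p \<in> V" "gdist E p x = 0"
    then have "p = x" using gdist_0[OF p(1) EV1[OF xy]] by simp
    then show "\<exists>q. E p q \<and> closer V E p q = closer V E x y \<and> closer V E q p = closer V E y x"
      using xy by blast
  qed
next
  case (Suc k)
  show ?case
  proof (intro ballI impI)
    fix p assume pV: "p \<in> V" and pd: "gdist E p x = Suc k" and pA: "p \<in> closer V E x y"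
    have xV: "x \<in> V" using EV1[OF xy] .
    have yV: "y \<in> V" using EV2[OF xy] .
    obtain p' where p': "E p p'" "gdist E p' x = k" using gdist_pred[OF xV pV pd] by blast
    have p'V: "p' \<in> V" using EV2[OF p'(1)] .
    have lt: "gdist E p x < gdist E p y" using pA unfolding closer_def by simp
    have "gdist E p y \<le> gdist E p p' + gdist E p' y" using gdist_tri[OF pV p'V yV] .
    then have "gdist E p y \<le> 1 + gdist E p' y" using gdist_edge[OF p'(1)] by simp
    then have p'A: "p' \<in> closer V E x y" unfolding closer_def using p'V lt pd p'(2) by simp
    obtain q' where q': "E p' q'" "closer V E p' q' = closer V E x y" "closer V E q' p' = closer V E y x"
      using Suc.IH p'V p'(2) p'A by blast
    have pA': "p \<in> closer V E p' q'" using pA q'(2) by simp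
    then have lt2: "gdist E p p' < gdist E p q'" unfolding closer_def by simp
    have pq'1: "p \<noteq> q'"
    proof
      assume "p = q'"
      then show False using lt2 by simp
    qed
    have pq'2: "\<not> E q' p"
    proof
      assume "E q' p"
      then have "gdist E p q' = 1" using gdist_edge[OF Esym] by blast
      then show False using lt2 gdist_edge[OF p'(1)] by simp
    qed
    have pX: "p \<in> Xs p' q'" unfolding Xs_def using pV Esym[OF p'(1)] pq'1 pq'2 by simp
    obtain \<sigma> where bij: "bij_betw \<sigma> (Xs p' q') (Xs q' p')" and adj: "\<forall>z\<in>Xs p' q'. E z (\<sigma> z)"
      using matching[OF q'(1)] by blast
    have wX: "\<sigma> p \<in> Xs q' p'" using bij pX unfolding bij_betw_def by blast
    have pw: "E p (\<sigma> p)" using adj pX by blast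
    have "closer V E p (\<sigma> p) = closer V E p' q' \<and> closer V E (\<sigma> p) p = closer V E q' p'"
      using cut_eq[OF q'(1) pX wX pw] .
    then show "\<exists>q. E p q \<and> closer V E p q = closer V E x y \<and> closer V E q p = closer V E y x"
      using pw q'(2) q'(3) by metis
  qed
qed

lemma good:
  assumes xy: "E x y" and pA: "p \<in> closer V E x y"
  shows "\<exists>q. E p q \<and> closer V E p q = closer V E x y \<and> closer V E q p = closer V E y x"
proof -
  have "p \<in> V" using pA closerV by blast
  then show ?thesis using propagate[OF xy, of "gdist E p x"] pA by blast
qed

lemma refl_exists:
  assumes xy: "E x y"
  shows "\<exists>\<phi>. reflection V E x y \<phi>"
proof -
  define A where "A = closer V E x y"
  define B where "B = closer V E y x"
  have yx: "E y x" using Esym[OF xy] .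
  have AV: "A \<subseteq> V" unfolding A_def by (rule closerV)
  have BV: "B \<subseteq> V" unfolding B_def by (rule closerV)
  have AB: "A \<inter> B = {}" unfolding A_def B_def closer_def by auto
  have selfA: "u \<in> closer V E u w" if "E u w" for u w
  proof -
    have "gdist E u w = 1" using gdist_edge[OF that] .
    then show ?thesis unfolding closer_def using EV1[OF that] by simp
  qed
  have goodA: "\<exists>q. E p q \<and> closer V E p q = A \<and> closer V E q p = B" if "p \<in> A" for p
    using good[OF xy] that unfolding A_def B_def by blast
  have goodB: "\<exists>p. E q p \<and> closer V E q p = B \<and> closer V E p q = A" if "q \<in> B" for q
    using good[OF yx] that unfolding A_def B_def by blast
  have uniq: "w2 = w1" if "E u w1" "closer V E w1 u = S" "w2 \<in> S" "E u w2" for u w1 w2 S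
  proof -
    have "gdist E w2 w1 < gdist E w2 u" using that(2,3) unfolding closer_def by blast
    then have "gdist E w2 w1 = 0" using gdist_edge[OF Esym[OF that(4)]] by simp
    then show ?thesis using gdist_0 EV2[OF that(1)] EV2[OF that(4)] by blast
  qed
  define \<phi> where "\<phi> v = (if v \<in> A then (SOME q. q \<in> B \<and> E v q)
      else if v \<in> B then (SOME p. p \<in> A \<and> E v p) else v)" for v
  have F1: "\<phi> p \<in> B \<and> E p (\<phi> p) \<and> closer V E p (\<phi> p) = A \<and> closer V E (\<phi> p) p = B" if pA: "p \<in> A" for p
  proof -
    obtain q where q: "E p q" "closer V E p q = A" "closer V E q p = B" using goodA[OF pA] by blast
    have qB: "q \<in> B" using selfA[OF Esym[OF q(1)]] q(3) by simp
    have ex: "\<exists>q. q \<in> B \<and> E p q" using qB q(1) by blast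
    have "(SOME q. q \<in> B \<and> E p q) \<in> B \<and> E p (SOME q. q \<in> B \<and> E p q)" using someI_ex[OF ex] .
    then have "(SOME q. q \<in> B \<and> E p q) = q" using uniq[OF q(1) q(3)] by blast
    then have "\<phi> p = q" unfolding \<phi>_def using pA by simp
    then show ?thesis using q qB by simp
  qed
  have F2: "\<phi> q \<in> A \<and> E q (\<phi> q) \<and> closer V E q (\<phi> q) = B \<and> closer V E (\<phi> q) q = A" if qB: "q \<in> B" for q
  proof -
    obtain p where p: "E q p" "closer V E q p = B" "closer V E p q = A" using goodB[OF qB] by blast
    have pA: "p \<in> A" using selfA[OF Esym[OF p(1)]] p(3) by simp
    have ex: "\<exists>p. p \<in> A \<and> E q p" using pA p(1) by blast
    have "(SOME p. p \<in> A \<and> E q p) \<in> A \<and> E q (SOME p. p \<in> A \<and> E q p)" using someI_ex[OF ex] .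
    then have "(SOME p. p \<in> A \<and> E q p) = p" using uniq[OF p(1) p(3)] by blast
    moreover have "q \<notin> A" using qB AB by blast
    ultimately have "\<phi> q = p" unfolding \<phi>_def using qB by simp
    then show ?thesis using p pA by simp
  qed
  have F3: "\<phi> p = q \<and> \<phi> q = p" if pA: "p \<in> A" and qB: "q \<in> B" and pq: "E p q" for p q
  proof -
    have "q = \<phi> p" using uniq[of p "\<phi> p" B q] F1[OF pA] qB pq by blast
    moreover have "p = \<phi> q" using uniq[of q "\<phi> q" A p] F2[OF qB] pA Esym[OF pq] by blast
    ultimately show ?thesis by simp
  qed
  have FC: "\<phi> v = v" if "v \<notin> A" "v \<notin> B" for v unfolding \<phi>_def using that by simp
  have inv: "\<phi> (\<phi> v) = v" if vV: "v \<in> V" for v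
  proof (cases "v \<in> A")
    case True
    then show ?thesis using F1[OF True] F3[OF True] by blast
  next
    case nA: False
    show ?thesis
    proof (cases "v \<in> B")
      case True
      have "\<phi> v \<in> A" "E (\<phi> v) v" using F2[OF True] Esym by blast+
      then show ?thesis using F3[OF _ True] by blast
    next
      case False
      then show ?thesis using FC nA by simp
    qed
  qed
  have phiV: "\<phi> v \<in> V" if "v \<in> V" for v
    using F1 F2 FC AV BV that by (cases "v \<in> A"; cases "v \<in> B") auto
  have eqC: "gdist E w u = gdist E w (\<phi> u)" if wV: "w \<in> V" "w \<notin> A" "w \<notin> B" and uAB: "u \<in> A \<or> u \<in> B" for w u
  proof -
    have "w \<notin> closer V E u (\<phi> u) \<and> w \<notin> closer V E (\<phi> u) u"
    proof (cases "u \<in> A")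
      case True then show ?thesis using F1[OF True] wV(2,3) by simp
    next
      case False then have "u \<in> B" using uAB by simp
      then show ?thesis using F2[of u] wV(2,3) by simp
    qed
    then show ?thesis unfolding closer_def using wV(1) by auto
  qed
  have opp: "gdist E w (\<phi> u) < gdist E w u" if "u \<in> A" "w \<in> B" for u w
    using F1[OF that(1)] that(2) unfolding closer_def by blast
  have opp2: "gdist E w (\<phi> u) < gdist E w u" if "u \<in> B" "w \<in> A" for u w
    using F2[OF that(1)] that(2) unfolding closer_def by blast
  have same_side: "E (\<phi> u) (\<phi> v)"
    if uv: "E u v" and other: "gdist E (\<phi> v) (\<phi> u) < gdist E (\<phi> v) u" and vV: "v \<in> V" for u v
  proof -
    have uV: "u \<in> V" using EV1[OF uv] .
    have pv: "\<phi> v \<in> V" using phiV[OF vV] .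
    have pu: "\<phi> u \<in> V" using phiV[OF uV] .
    have "E v (\<phi> v) \<or> \<phi> v = v" using F1 F2 FC by (cases "v \<in> A"; cases "v \<in> B") auto
    then have "gdist E (\<phi> v) v \<le> 1"
    proof
      assume "E v (\<phi> v)"
      then show ?thesis using gdist_edge[OF Esym[of v "\<phi> v"]] by simp
    next
      assume "\<phi> v = v" then show ?thesis by simp
    qed
    moreover have "gdist E (\<phi> v) u \<le> gdist E (\<phi> v) v + gdist E v u" using gdist_tri[OF pv vV uV] .
    ultimately have "gdist E (\<phi> v) u \<le> 2" using gdist_edge[OF Esym[OF uv]] by simp
    then have le1: "gdist E (\<phi> v) (\<phi> u) \<le> 1" using other by simp
    have ne: "\<phi> v \<noteq> \<phi> u"
    proof
      assume "\<phi> v = \<phi> u"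
      then have "\<phi> (\<phi> v) = \<phi> (\<phi> u)" by simp
      then have "v = u" using inv[OF vV] inv[OF uV] by simp
      then show False using Eneq[OF uv] by simp
    qed
    have "gdist E (\<phi> v) (\<phi> u) \<noteq> 0" using gdist_0[OF pv pu] ne by blast
    then have "gdist E (\<phi> v) (\<phi> u) = 1" using le1 by simp
    then have "E (\<phi> v) (\<phi> u)" using gdist_one[OF pv pu] by blast
    then show ?thesis by (rule Esym)
  qed
  have adj: "E (\<phi> u) (\<phi> v)" if uv: "E u v" for u v
  proof -
    have uV: "u \<in> V" using EV1[OF uv] .
    have vV: "v \<in> V" using EV2[OF uv] .
    consider (AA) "u \<in> A" "v \<in> A" | (BB) "u \<in> B" "v \<in> B" | (AB') "u \<in> A" "v \<in> B"
      | (BA) "u \<in> B" "v \<in> A" | (XC) "u \<in> A \<or> u \<in> B" "v \<notin> A" "v \<notin> B"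
      | (CX) "u \<notin> A" "u \<notin> B" by blast
    then show ?thesis
    proof cases
      case AA
      have "\<phi> v \<in> B" using F1[OF AA(2)] by blast
      then show ?thesis using same_side[OF uv opp[OF AA(1)] vV] by blast
    next
      case BB
      have "\<phi> v \<in> A" using F2[OF BB(2)] by blast
      then show ?thesis using same_side[OF uv opp2[OF BB(1)] vV] by blast
    next
      case AB'
      then show ?thesis using F3[OF AB' uv] Esym[OF uv] by simp
    next
      case BA
      then show ?thesis using F3[OF BA(2) BA(1) Esym[OF uv]] Esym[OF uv] by simp
    next
      case XC
      have "gdist E v (\<phi> u) = gdist E v u" using eqC[OF vV XC(2,3) XC(1)] by simp
      then have "gdist E v (\<phi> u) = 1" using gdist_edge[OF Esym[OF uv]] by simp
      then have "E v (\<phi> u)" using gdist_one[OF vV phiV[OF uV]] by blast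
      then have "E (\<phi> u) v" by (rule Esym)
      then show ?thesis using FC[OF XC(2,3)] by simp
    next
      case CX
      show ?thesis
      proof (cases "v \<in> A \<or> v \<in> B")
        case True
        have "gdist E u (\<phi> v) = gdist E u v" using eqC[OF uV CX True] by simp
        then have "gdist E u (\<phi> v) = 1" using gdist_edge[OF uv] by simp
        then have "E u (\<phi> v)" using gdist_one[OF uV phiV[OF vV]] by blast
        then show ?thesis using FC[OF CX] by simp
      next
        case False
        then show ?thesis using FC[OF CX] FC[of v] uv by simp
      qed
    qed
  qed
  have aut: "automorphism V E \<phi>"
    unfolding automorphism_def
  proof (intro conjI ballI)
    show "bij_betw \<phi> V V"
      by (rule bij_betw_byWitness[where f'=\<phi>]) (use inv phiV in auto)
    fix u v assume uV: "u \<in> V" and vV: "v \<in> V"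
    show "E u v = E (\<phi> u) (\<phi> v)"
    proof
      assume "E u v" then show "E (\<phi> u) (\<phi> v)" by (rule adj)
    next
      assume "E (\<phi> u) (\<phi> v)"
      then have "E (\<phi> (\<phi> u)) (\<phi> (\<phi> v))" by (rule adj)
      then show "E u v" using inv[OF uV] inv[OF vV] by simp
    qed
  qed
  have xA: "x \<in> A" unfolding A_def using selfA[OF xy] .
  have yB: "y \<in> B" unfolding B_def using selfA[OF yx] .
  have phix: "\<phi> x = y" using F3[OF xA yB xy] by simp
  have edges: "{{u, w} | u w. u \<in> closer V E x y \<and> w \<in> closer V E y x \<and> E u w}
       = {{x', \<phi> x'} | x'. x' \<in> closer V E x y}"
  proof
    show "{{u, w} | u w. u \<in> closer V E x y \<and> w \<in> closer V E y x \<and> E u w}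
       \<subseteq> {{x', \<phi> x'} | x'. x' \<in> closer V E x y}"
    proof
      fix e assume "e \<in> {{u, w} | u w. u \<in> closer V E x y \<and> w \<in> closer V E y x \<and> E u w}"
      then obtain u w where e: "e = {u, w}" "u \<in> A" "w \<in> B" "E u w" unfolding A_def B_def by blast
      have "\<phi> u = w" using F3[OF e(2) e(3) e(4)] by simp
      then show "e \<in> {{x', \<phi> x'} | x'. x' \<in> closer V E x y}" using e unfolding A_def by blast
    qed
    show "{{x', \<phi> x'} | x'. x' \<in> closer V E x y}
       \<subseteq> {{u, w} | u w. u \<in> closer V E x y \<and> w \<in> closer V E y x \<and> E u w}"
    proof
      fix e assume "e \<in> {{x', \<phi> x'} | x'. x' \<in> closer V E x y}"
      then obtain u where e: "e = {u, \<phi> u}" "u \<in> A" unfolding A_def by blast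
      have "\<phi> u \<in> B" "E u (\<phi> u)" using F1[OF e(2)] by blast+
      then show "e \<in> {{u, w} | u w. u \<in> closer V E x y \<and> w \<in> closer V E y x \<and> E u w}"
        using e unfolding A_def B_def by blast
    qed
  qed
  have fixC: "\<phi> v = v" if "v \<in> equidist V E x y" for v
  proof -
    have "v \<notin> A" "v \<notin> B" using that unfolding equidist_def A_def B_def closer_def by auto
    then show ?thesis by (rule FC)
  qed
  have "reflection V E x y \<phi>"
    unfolding reflection_def
  proof (intro conjI)
    show "automorphism V E \<phi>" by (rule aut)
    show "\<forall>v\<in>V. \<phi> (\<phi> v) = v" using inv by blast
    show "\<phi> x = y" by (rule phix)
    show "{{u, w} | u w. u \<in> closer V E x y \<and> w \<in> closer V E y x \<and> E u w}
       = {{x', \<phi> x'} | x'. x' \<in> closer V E x y}" by (rule edges)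
    show "\<forall>v\<in>equidist V E x y. \<phi> v = v" using fixC by blast
  qed
  then show ?thesis by blast
qed

end

theorem theorem3p5:
  fixes V :: "'a set" and E :: "'a \<Rightarrow> 'a \<Rightarrow> bool"
  assumes "finite_simple_graph V E"
    and "connected_graph V E"
    and "min_curv V E > 0"
    and "diam_eff V E = real (max_deg V E) / min_curv V E"
  shows "reflective V E"
  unfolding reflective_def
proof (intro allI impI)
  fix x y assume xy: "E x y"
  interpret g2: G2 V E x y
    by unfold_locales (simp_all add: assms xy)
  show "\<exists>\<phi>. reflection V E x y \<phi>" by (rule g2.refl_exists[OF xy])
qed

end
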